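(* Let $\mathbf A$ be a BBL transformation of bandwidth $(p,q)$ and $A=\mathbf P_{1,\infty}\mathbf A|_{\mathcal V_{1,\infty}}$ the associated infinite BBT transformation. Then $\mathbf P_{1,\infty}\ker\mathbf A\subseteq\ker P_BA$, and if the principal coefficient $a_{p'}$ is invertible, then $\ker P_BA=\mathbf P_{1,\infty}\ker\mathbf A$.
   Context: Fix $d\ge1$. $\mathcal V^S_d$: doubly infinite sequences $\{\psi_j\}_{j\in\mathbb Z}$, $\psi_j\in\mathbb C^d$. A matrix Laurent polynomial of bandwidth $(p,q)$ is $\sum_{r=p}^qa_rw^r$, integers $p\le q$, $a_r$ complex $d\times d$, $a_p\ne0\ne a_q$; its BBL transformation is $(\mathbf A\Psi)_j=\sum_ra_r\psi_{j+r}$. $p'=\min(p,0)$; the principal coefficient $a_{p'}$ equals $a_p$ if $p\le0$ and $0$ if $p>0$. $\mathcal V_{1,\infty}$ = sequences with $\psi_j=0$ for $j<1$ (identified with $\{\psi_j\}_{j\in\mathbb N}$); $\mathbf P_{1,\infty}$ zeroes all entries with $j<1$. On $\mathcal V_{1,\infty}$, $P_B$ is the projector setting $\psi_j=0$ for $j=1,\dots,-p'$ and leaving $\psi_j$ for $j>-p'$ unchanged (so $P_B=\mathbb 1$ if $p'=0$). *)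

theory Defs
  imports "HOL-Analysis.Analysis"
begin

text \<open>Dimension d is the cardinality of the finite index type 'd (so d \<ge> 1).\<close>

type_synonym ('d) seq = "int \<Rightarrow> complex ^ ('d::finite)"

definition bandwidth :: "(int \<Rightarrow> complex^('d::finite)^'d) \<Rightarrow> int \<Rightarrow> int \<Rightarrow> bool" where
  "bandwidth a p q \<longleftrightarrow> p \<le> q \<and> a p \<noteq> 0 \<and> a q \<noteq> 0 \<and> (\<forall>r. (r < p \<or> q < r) \<longrightarrow> a r = 0)"

definition BBL :: "(int \<Rightarrow> complex^('d::finite)^'d) \<Rightarrow> int \<Rightarrow> int \<Rightarrow> 'd seq \<Rightarrow> 'd seq" where
  "BBL a p q psi = (\<lambda>j. \<Sum>r\<in>{p..q}. a r *v psi (j + r))"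

definition P1inf :: "('d::finite) seq \<Rightarrow> 'd seq" where
  "P1inf psi = (\<lambda>j. if j < 1 then 0 else psi j)"

definition V1inf :: "('d::finite) seq set" where
  "V1inf = {psi. \<forall>j<1. psi j = 0}"

definition pprime :: "int \<Rightarrow> int" where
  "pprime p = min p 0"

definition principal_coeff :: "(int \<Rightarrow> complex^('d::finite)^'d) \<Rightarrow> int \<Rightarrow> complex^('d::finite)^'d" where
  "principal_coeff a p = (if p \<le> 0 then a p else 0)"

definition BBT :: "(int \<Rightarrow> complex^('d::finite)^'d) \<Rightarrow> int \<Rightarrow> int \<Rightarrow> 'd seq \<Rightarrow> 'd seq" where
  "BBT a p q psi = P1inf (BBL a p q psi)"

definition PB :: "int \<Rightarrow> ('d::finite) seq \<Rightarrow> 'd seq" where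
  "PB p psi = (\<lambda>j. if j \<le> - pprime p then 0 else psi j)"

definition kerBBL :: "(int \<Rightarrow> complex^('d::finite)^'d) \<Rightarrow> int \<Rightarrow> int \<Rightarrow> 'd seq set" where
  "kerBBL a p q = {psi. BBL a p q psi = (\<lambda>_. 0)}"

definition kerPBA :: "(int \<Rightarrow> complex^('d::finite)^'d) \<Rightarrow> int \<Rightarrow> int \<Rightarrow> 'd seq set" where
  "kerPBA a p q = {psi \<in> V1inf. PB p (BBT a p q psi) = (\<lambda>_. 0)}"

end

theory Submission
  imports Defs
begin

lemma not_inv0: "\<not> invertible (0::complex^'d::finite^'d)"
proof
  assume "invertible (0::complex^'d^'d)"
  then obtain B where "(0::complex^'d^'d) ** B = mat 1" unfolding invertible_def by blast
  then have "(mat 1 :: complex^'d^'d) = 0" by simp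
  then have "(mat 1 :: complex^'d^'d) $ undefined $ undefined = 0" by simp
  then show False by (simp add: mat_def)
qed

lemma minv_right:
  assumes "invertible (A::complex^'d::finite^'d)"
  shows "A ** matrix_inv A = mat 1"
proof -
  have "\<exists>A'. A ** A' = mat 1 \<and> A' ** A = mat 1" using assms unfolding invertible_def by blast
  then show ?thesis unfolding matrix_inv_def by (rule someI_ex[THEN conjunct1])
qed

lemma part1:
  assumes "bandwidth a p q"
  shows "P1inf ` kerBBL a p q \<subseteq> kerPBA a p q"
proof
  fix phi assume "phi \<in> P1inf ` kerBBL a p q"
  then obtain psi where psi: "BBL a p q psi = (\<lambda>_. 0)" and phi: "phi = P1inf psi"
    unfolding kerBBL_def by auto
  have "PB p (BBT a p q phi) j = 0" for j
  proof (cases "j \<le> - pprime p \<or> j < 1")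
    case True then show ?thesis by (auto simp: PB_def BBT_def P1inf_def)
  next
    case False
    have "BBL a p q phi j = BBL a p q psi j"
      unfolding BBL_def phi P1inf_def
      by (rule sum.cong) (use False in \<open>auto simp: pprime_def\<close>)
    then show ?thesis using False psi by (simp add: PB_def BBT_def P1inf_def fun_eq_iff)
  qed
  moreover have "phi \<in> V1inf" by (simp add: phi V1inf_def P1inf_def)
  ultimately show "phi \<in> kerPBA a p q" by (auto simp: kerPBA_def)
qed

theorem mainTheorem16:
  fixes a :: "int \<Rightarrow> complex^'d^'d" and p q :: int
  assumes "bandwidth a p q"
  shows "P1inf ` kerBBL a p q \<subseteq> kerPBA a p q \<and>
         (invertible (principal_coeff a p) \<longrightarrow> kerPBA a p q = P1inf ` kerBBL a p q)"
proof (intro conjI impI)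
  show "P1inf ` kerBBL a p q \<subseteq> kerPBA a p q" by (rule part1[OF assms])
  assume inv: "invertible (principal_coeff a p)"
  have p0: "p \<le> 0" using inv not_inv0 by (auto simp: principal_coeff_def split: if_splits)
  with inv have invp: "invertible (a p)" by (simp add: principal_coeff_def)
  have pq: "p \<le> q" using assms by (simp add: bandwidth_def)
  show "kerPBA a p q = P1inf ` kerBBL a p q"
  proof
    show "P1inf ` kerBBL a p q \<subseteq> kerPBA a p q" by (rule part1[OF assms])
    show "kerPBA a p q \<subseteq> P1inf ` kerBBL a p q"
    proof
      fix phi assume ph: "phi \<in> kerPBA a p q"
      have phV: "\<And>j. j < 1 \<Longrightarrow> phi j = 0" using ph by (auto simp: kerPBA_def V1inf_def)
      have phK: "BBL a p q phi k = 0" if "k > -p" for k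
      proof -
        have "PB p (BBT a p q phi) k = 0" using ph by (auto simp: kerPBA_def fun_eq_iff)
        then show ?thesis using that p0 by (simp add: PB_def BBT_def P1inf_def pprime_def split: if_splits)
      qed
      define S where "S = (\<lambda>(f::'d seq) (j::int). \<Sum>r\<in>{p<..q}. a r *v f (j - p + r))"
      define F where "F = rec_nat phi (\<lambda>n f. f(- int n := - (matrix_inv (a p) *v S f (- int n))))"
      have F0: "F 0 = phi" by (simp add: F_def)
      have FS: "F (Suc n) = (F n)(- int n := - (matrix_inv (a p) *v S (F n) (- int n)))" for n
        by (simp add: F_def)
      define psi where "psi = (\<lambda>j. F (nat (1 - j)) j)"
      have stab: "nat (1 - i) \<le> m \<Longrightarrow> F m i = psi i" for m i
      proof (induction m)
        case 0 then show ?case by (simp add: psi_def)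
      next
        case (Suc m)
        show ?case
        proof (cases "nat (1 - i) = Suc m")
          case True then show ?thesis by (simp add: psi_def)
        next
          case False
          then have "nat (1 - i) \<le> m" "i \<noteq> - int m" using Suc.prems by auto
          then show ?thesis using Suc.IH FS by simp
        qed
      qed
      have psipos: "psi j = phi j" if "j \<ge> 1" for j using that by (simp add: psi_def F0)
      have psineg: "psi j = - (matrix_inv (a p) *v S psi j)" if "j \<le> 0" for j
      proof -
        define n where "n = nat (- j)"
        have jn: "j = - int n" using that by (simp add: n_def)
        have "psi j = F (Suc n) j" by (simp add: psi_def jn Suc_as_int add.commute)
        also have "\<dots> = - (matrix_inv (a p) *v S (F n) j)" by (simp add: FS jn)
        also have "S (F n) j = S psi j" unfolding S_def
          by (rule sum.cong) (auto intro!: arg_cong[where f="\<lambda>x. _ *v x"] stab simp: jn)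
        finally show ?thesis .
      qed
      have split: "BBL a p q f k = a p *v f (k + p) + S f (k + p)" for f k
      proof -
        have "{p..q} = insert p {p<..q}" using pq by auto
        then show ?thesis unfolding BBL_def S_def by simp
      qed
      have "BBL a p q psi k = 0" for k
      proof (cases "k > -p")
        case True
        have "BBL a p q psi k = BBL a p q phi k" unfolding BBL_def
          by (rule sum.cong) (use True in \<open>auto intro!: psipos arg_cong[where f="\<lambda>x. _ *v x"]\<close>)
        then show ?thesis using phK True by simp
      next
        case False
        have "a p *v psi (k + p) = a p *v (- (matrix_inv (a p) *v S psi (k + p)))"
          using psineg False by simp
        also have "\<dots> = - S psi (k + p)"
        proof -
          have "a p *v (matrix_inv (a p) *v S psi (k + p)) = S psi (k + p)"
            by (simp only: matrix_vector_mul_assoc minv_right[OF invp] matrix_vector_mul_lid)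
          then show ?thesis using linear_neg[OF matrix_vector_mul_linear, of "a p" "matrix_inv (a p) *v S psi (k + p)"] by simp
        qed
        finally show ?thesis using split[of psi k] by simp
      qed
      then have "psi \<in> kerBBL a p q" by (simp add: kerBBL_def fun_eq_iff)
      moreover have "phi = P1inf psi"
        by (auto simp: P1inf_def fun_eq_iff phV psipos)
      ultimately show "phi \<in> P1inf ` kerBBL a p q" by blast
    qed
  qed
qed

end
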